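(* Let $\mathbf{f}:\mathbb{R}^n\times\mathbb{R}^+\to\mathbb{R}^n$ be continuously differentiable in its first argument and $\sigma:\mathbb{R}^n\times\mathbb{R}^+\to\mathbb{R}^{n\times d}$, and assume the Lipschitz condition $\|\mathbf{f}(\mathbf{a},t)-\mathbf{f}(\mathbf{b},t)\|+\|\sigma(\mathbf{a},t)-\sigma(\mathbf{b},t)\|\le K_1\|\mathbf{a}-\mathbf{b}\|$ and the growth condition $\|\mathbf{f}(\mathbf{a},t)\|^2+\|\sigma(\mathbf{a},t)\|^2\le K_2(1+\|\mathbf{a}\|^2)$ for all $t\ge0$, $\mathbf{a},\mathbf{b}\in\mathbb{R}^n$, for some constants $K_1,K_2>0$. Assume: (H1) there is $\lambda>0$ such that for all $\mathbf{a},t$, the largest eigenvalue of the symmetric part of the Jacobian $\frac{\partial \mathbf{f}}{\partial \mathbf{a}}(\mathbf{a},t)$ is at most $-\lambda$; (H2) there is a constant $C$ such that for all $\mathbf{a},t$, $\mathrm{tr}(\sigma(\mathbf{a},t)^T\sigma(\mathbf{a},t))\le C$. Consider the augmented process $\mathbf{x}=(\mathbf{a},\mathbf{b})\in\mathbb{R}^{2n}$ satisfying the Itô equation $d\mathbf{x}=\begin{pmatrix}\mathbf{f}(\mathbf{a},t)\\ \mathbf{f}(\mathbf{b},t)\end{pmatrix}dt+\begin{pmatrix}\sigma(\mathbf{a},t)&0\\0&\sigma(\mathbf{b},t)\end{pmatrix}\begin{pmatrix}dW_1^d\\ dW_2^d\end{pmatrix}$, where $W_1^d,W_2^d$ are independent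 standard $d$-dimensional Wiener processes, and let $V(\mathbf{x})=\|\mathbf{a}-\mathbf{b}\|^2$. Then for every $\mathbf{x}$ (and every $t$), $\widetilde{A}V(\mathbf{x})\le -2\lambda V(\mathbf{x})+2C$, where $\widetilde{A}$ is the infinitesimal operator of the process $\mathbf{x}(t)$.
   Context: For the Itô process $d\mathbf{x}=\hat{\mathbf{f}}(\mathbf{x},t)dt+\hat\sigma(\mathbf{x},t)dW$ the infinitesimal operator $\widetilde A$ coincides with the differential generator $\mathscr{L}V=\frac{\partial V}{\partial t}+\frac{\partial V}{\partial\mathbf{x}}\hat{\mathbf{f}}(\mathbf{x},t)+\frac12\mathrm{tr}\big(\hat\sigma(\mathbf{x},t)^T\frac{\partial^2V}{\partial\mathbf{x}^2}\hat\sigma(\mathbf{x},t)\big)$. *)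

theory Defs
  imports "HOL-Analysis.Analysis"
begin

definition mat_eigenvalue :: "real^'n^'n \<Rightarrow> real \<Rightarrow> bool" where
  "mat_eigenvalue A \<mu> \<longleftrightarrow> (\<exists>v. v \<noteq> 0 \<and> A *v v = \<mu> *\<^sub>R v)"

definition sym_part :: "real^'n^'n \<Rightarrow> real^'n^'n" where
  "sym_part A = (1/2) *\<^sub>R (A + transpose A)"

text \<open>Differential generator of an Ito process dx = F(x,t) dt + G(x,t) dW applied to V:
  dV/dt + (dV/dx) F + 1/2 tr(G^T (d^2V/dx^2) G).\<close>
definition ito_generator ::
  "(real^'m \<Rightarrow> real \<Rightarrow> real) \<Rightarrow> (real^'m \<Rightarrow> real \<Rightarrow> real^'m)
   \<Rightarrow> (real^'m \<Rightarrow> real \<Rightarrow> real^'k^'m) \<Rightarrow> real^'m \<Rightarrow> real \<Rightarrow> real" where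
  "ito_generator V F G x t =
     deriv (\<lambda>s. V x s) t
     + frechet_derivative (\<lambda>y. V y t) (at x) (F x t)
     + (1/2) * (\<Sum>k\<in>UNIV. \<Sum>i\<in>UNIV. \<Sum>j\<in>UNIV.
          G x t $ i $ k
          * frechet_derivative (\<lambda>y. frechet_derivative (\<lambda>z. V z t) (at y) (axis j 1)) (at x) (axis i 1)
          * G x t $ j $ k)"

definition fstblk :: "real^('n::finite + 'n) \<Rightarrow> real^'n" where
  "fstblk x = (\<chi> i. x $ Inl i)"
definition sndblk :: "real^('n::finite + 'n) \<Rightarrow> real^'n" where
  "sndblk x = (\<chi> i. x $ Inr i)"

definition aug_drift :: "(real^'n::finite \<Rightarrow> real \<Rightarrow> real^'n) \<Rightarrow> real^('n+'n) \<Rightarrow> real \<Rightarrow> real^('n::finite+'n)" where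
  "aug_drift f x t = (\<chi> k. case k of Inl i \<Rightarrow> f (fstblk x) t $ i | Inr i \<Rightarrow> f (sndblk x) t $ i)"

definition aug_diff :: "(real^'n::finite \<Rightarrow> real \<Rightarrow> real^'d^'n) \<Rightarrow> real^('n+'n) \<Rightarrow> real \<Rightarrow> real^('d+'d)^('n::finite+'n)" where
  "aug_diff \<sigma> x t = (\<chi> k l. case (k, l) of
       (Inl i, Inl j) \<Rightarrow> \<sigma> (fstblk x) t $ i $ j
     | (Inr i, Inr j) \<Rightarrow> \<sigma> (sndblk x) t $ i $ j
     | _ \<Rightarrow> 0)"

definition aug_V :: "real^('n::finite+'n) \<Rightarrow> real \<Rightarrow> real" where
  "aug_V x t = (norm (fstblk x - sndblk x))\<^sup>2"

end

theory Submission imports Defs begin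

lemma sym_dot:
  fixes S :: "real^'n^'n"
  assumes "transpose S = S"
  shows "w \<bullet> (S *v v) = v \<bullet> (S *v w)"
proof -
  have "w \<bullet> (S *v v) = (w v* S) \<bullet> v" by (simp add: dot_lmul_matrix)
  also have "\<dots> = (transpose S *v w) \<bullet> v" by simp
  finally show ?thesis using assms by (simp add: inner_commute)
qed

lemma quad_expand:
  fixes S :: "real^'n^'n"
  assumes "transpose S = S"
  shows "(v + s *\<^sub>R w) \<bullet> (S *v (v + s *\<^sub>R w)) = v \<bullet> (S *v v) + 2 * s * (w \<bullet> (S *v v)) + s^2 * (w \<bullet> (S *v w))"
  using sym_dot[OF assms, of w v]
  by (simp add: matrix_vector_right_distrib matrix_vector_mult_scaleR inner_add_left inner_add_right power2_eq_square algebra_simps)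

lemma quad_zero_lin:
  fixes A B :: real
  assumes "\<And>s. s * A + s^2 * B \<ge> 0"
  shows "A = 0"
proof (rule ccontr)
  assume "A \<noteq> 0"
  define e where "e = 1 / (\<bar>B\<bar> + 1)"
  have e: "e > 0" "e * \<bar>B\<bar> < 1" unfolding e_def by (auto simp: field_simps)
  have "(- e * A) * A + (- e * A)^2 * B \<ge> 0" by (rule assms)
  hence "e * A^2 * (e * B - 1) \<ge> 0" by (simp add: power2_eq_square algebra_simps)
  moreover have "e * A^2 > 0" using e \<open>A \<noteq> 0\<close> by simp
  ultimately have "e * B - 1 \<ge> 0" by (simp add: zero_le_mult_iff)
  moreover have "e * B \<le> e * \<bar>B\<bar>" using e by (simp add: mult_left_mono)
  ultimately show False using e by linarith
qed

lemma quad_bound: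
  fixes S :: "real^'n^'n"
  assumes sym: "transpose S = S"
    and eig: "\<And>\<mu>. mat_eigenvalue S \<mu> \<Longrightarrow> \<mu> \<le> - lam"
  shows "v \<bullet> (S *v v) \<le> - lam * (v \<bullet> v)"
proof -
  let ?q = "\<lambda>u::real^'n. u \<bullet> (S *v u)"
  have cq: "continuous_on UNIV ?q"
    by (intro continuous_intros linear_continuous_on matrix_vector_mul_linear bounded_linear_inner_right bounded_linear_compose[of "\<lambda>x. x"]; simp add: matrix_vector_mul_bounded_linear)
  have comp: "compact (sphere (0::real^'n) 1)" by simp
  have ne: "sphere (0::real^'n) 1 \<noteq> {}" using vector_choose_size[of 1] by (auto simp: sphere_def)
  obtain v0 where v0: "v0 \<in> sphere 0 1" and mx: "\<And>u. u \<in> sphere 0 1 \<Longrightarrow> ?q u \<le> ?q v0"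
    using continuous_attains_sup[OF comp ne continuous_on_subset[OF cq]] by blast
  define \<mu> where "\<mu> = ?q v0"
  have nv0: "v0 \<bullet> v0 = 1" using v0 by (simp add: dot_square_norm)
  have allu: "?q u \<le> \<mu> * (u \<bullet> u)" for u
  proof (cases "u = 0")
    case True then show ?thesis by simp
  next
    case False
    let ?u = "(1 / norm u) *\<^sub>R u"
    have "?u \<in> sphere 0 1" using False by simp
    hence "?q ?u \<le> \<mu>" using mx \<mu>_def by blast
    moreover have "?q u = (norm u)^2 * ?q ?u" using False
      by (simp add: matrix_vector_mult_scaleR power2_eq_square)
    moreover have "u \<bullet> u = (norm u)^2" by (simp add: dot_square_norm)
    ultimately show ?thesis
      by (metis mult.commute mult_right_mono zero_le_power2)
  qed
  have ortho: "w \<bullet> (S *v v0 - \<mu> *\<^sub>R v0) = 0" for w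
  proof -
    have "s * (2 * (\<mu> * (w \<bullet> v0) - w \<bullet> (S *v v0))) + s^2 * (\<mu> * (w \<bullet> w) - w \<bullet> (S *v w)) \<ge> 0" for s
    proof -
      have "?q (v0 + s *\<^sub>R w) \<le> \<mu> * ((v0 + s *\<^sub>R w) \<bullet> (v0 + s *\<^sub>R w))" by (rule allu)
      thus ?thesis unfolding quad_expand[OF sym]
        by (simp add: inner_add_left inner_add_right nv0 \<mu>_def[symmetric] inner_commute[of v0 w] power2_eq_square algebra_simps)
    qed
    from quad_zero_lin[OF this] show ?thesis by (simp add: inner_diff_right)
  qed
  have "S *v v0 - \<mu> *\<^sub>R v0 = 0" using ortho[of "S *v v0 - \<mu> *\<^sub>R v0"] by simp
  hence "mat_eigenvalue S \<mu>" unfolding mat_eigenvalue_def using nv0 by (intro exI[of _ v0]) auto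
  hence "\<mu> \<le> - lam" by (rule eig)
  moreover have "v \<bullet> v \<ge> 0" by simp
  ultimately show ?thesis using allu[of v] by (meson mult_right_mono order_trans)
qed


lemma scaleR_mat_vec: "((c::real) *\<^sub>R (A::real^'n^'m)) *v v = c *\<^sub>R (A *v v)"
  by (simp add: vec_eq_iff matrix_vector_mult_def sum_distrib_left algebra_simps)

lemma drift_bound:
  fixes f :: "real^'n \<Rightarrow> real^'n"
  assumes diff: "\<And>a. f differentiable (at a)"
    and H1: "\<And>a \<mu>. mat_eigenvalue (sym_part (jacobian f (at a))) \<mu> \<Longrightarrow> \<mu> \<le> - lam"
  shows "(a - b) \<bullet> (f a - f b) \<le> - lam * ((a - b) \<bullet> (a - b))"
proof -
  define v where "v = a - b"
  define g where "g s = v \<bullet> f (b + s *\<^sub>R v)" for s :: real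
  define J where "J s = jacobian f (at (b + s *\<^sub>R v))" for s
  have gd: "(g has_real_derivative (v \<bullet> (J s *v v))) (at s)" for s
  proof -
    have fd: "(f has_derivative (\<lambda>h. J s *v h)) (at (b + s *\<^sub>R v))"
      unfolding J_def using diff jacobian_works by blast
    have ld: "((\<lambda>s. b + s *\<^sub>R v) has_derivative (\<lambda>h. h *\<^sub>R v)) (at s)"
      by (auto intro!: derivative_eq_intros)
    have "((\<lambda>s. f (b + s *\<^sub>R v)) has_derivative (\<lambda>h. J s *v (h *\<^sub>R v))) (at s)"
      using has_derivative_compose[OF ld fd] by (simp add: o_def)
    hence "(g has_derivative (\<lambda>h. v \<bullet> (J s *v (h *\<^sub>R v)))) (at s)"
      unfolding g_def by (rule has_derivative_inner_right)
    thus ?thesis unfolding has_field_derivative_def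
      by (rule has_derivative_eq_rhs) (auto simp: matrix_vector_mult_scaleR fun_eq_iff)
  qed
  obtain z where "g 1 - g 0 = (1 - 0) * (v \<bullet> (J z *v v))"
    using MVT2[of 0 1 g "\<lambda>s. v \<bullet> (J s *v v)"] gd by force
  hence eq: "v \<bullet> (f a - f b) = v \<bullet> (J z *v v)"
    by (simp add: g_def v_def inner_diff_right)
  let ?S = "sym_part (J z)"
  have symS: "transpose ?S = ?S"
    by (simp add: sym_part_def vec_eq_iff transpose_def)
  have "v \<bullet> (?S *v v) = v \<bullet> (J z *v v)"
  proof -
    have "v \<bullet> (transpose (J z) *v v) = v \<bullet> (J z *v v)"
      by (simp add: dot_lmul_matrix[symmetric] inner_commute)
    thus ?thesis
      by (simp add: sym_part_def scaleR_mat_vec matrix_vector_mult_add_rdistrib inner_add_right)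
  qed
  moreover have "v \<bullet> (?S *v v) \<le> - lam * (v \<bullet> v)"
    by (rule quad_bound[OF symS]) (unfold J_def, rule H1)
  ultimately show ?thesis using eq v_def by simp
qed


definition pd :: "real^('n::finite+'n) \<Rightarrow> real^'n" where
  "pd y = fstblk y - sndblk y"

lemma lin_pd: "bounded_linear pd"
proof -
  have "linear pd"
    by (auto simp: linear_iff pd_def fstblk_def sndblk_def vec_eq_iff algebra_simps)
  thus ?thesis by (simp add: linear_conv_bounded_linear)
qed

lemma V_eq: "aug_V y t = pd y \<bullet> pd y"
  by (simp add: aug_V_def pd_def power2_norm_eq_inner)

lemma fd1: "frechet_derivative (\<lambda>z. aug_V z t) (at y) = (\<lambda>h. 2 * (pd y \<bullet> pd h))"
proof -
  have "((\<lambda>z. pd z \<bullet> pd z) has_derivative (\<lambda>h. pd y \<bullet> pd h + pd h \<bullet> pd y)) (at y)"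
    by (rule has_derivative_inner; rule bounded_linear.has_derivative[OF lin_pd has_derivative_ident])
  hence "((\<lambda>z. aug_V z t) has_derivative (\<lambda>h. 2 * (pd y \<bullet> pd h))) (at y)"
    unfolding V_eq by (rule has_derivative_eq_rhs) (auto simp: inner_commute fun_eq_iff)
  thus ?thesis by (metis frechet_derivative_at)
qed

lemma fd2: "frechet_derivative (\<lambda>y. frechet_derivative (\<lambda>z. aug_V z t) (at y) e) (at x) = (\<lambda>h. 2 * (pd h \<bullet> pd e))"
proof -
  have "((\<lambda>y. 2 * (pd y \<bullet> pd e)) has_derivative (\<lambda>h. 2 * (pd h \<bullet> pd e))) (at x)"
    by (intro has_derivative_mult_right has_derivative_inner_left
        bounded_linear.has_derivative[OF lin_pd has_derivative_ident])
  thus ?thesis unfolding fd1 by (metis frechet_derivative_at)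
qed

lemma quadsum:
  fixes P :: "real^'m \<Rightarrow> real^'k"
  assumes "bounded_linear P"
  shows "P c \<bullet> P c = (\<Sum>i\<in>UNIV. \<Sum>j\<in>UNIV. c$i * (P (axis i 1) \<bullet> P (axis j 1)) * c$j)"
proof -
  interpret bounded_linear P by fact
  have "c = (\<Sum>i\<in>UNIV. c$i *\<^sub>R axis i 1)"
    using basis_expansion[of c] by (simp add: scalar_mult_eq_scaleR)
  hence Pc: "P c = (\<Sum>i\<in>UNIV. c$i *\<^sub>R P (axis i 1))"
    by (metis (no_types, lifting) scaleR sum sum.cong)
  show ?thesis unfolding Pc
    apply (simp add: inner_sum_left inner_sum_right sum_distrib_left algebra_simps)
    apply (subst sum.swap)
    apply (simp add: algebra_simps inner_commute)
    done
qed

lemma colsq: "(\<Sum>l\<in>UNIV. (\<chi> i. M$i$l) \<bullet> (\<chi> i. M$i$l)) = trace (transpose (M::real^'d^'n) ** M)"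
  by (simp add: trace_def inner_vec_def matrix_matrix_mult_def transpose_def)

theorem lemma1:
  fixes f :: "real^'n \<Rightarrow> real \<Rightarrow> real^'n"
    and \<sigma> :: "real^'n \<Rightarrow> real \<Rightarrow> real^'d^'n"
    and lam C :: real
  assumes diff: "\<And>a t. t \<ge> 0 \<Longrightarrow> (\<lambda>y. f y t) differentiable (at a)"
    and cont_diff: "\<And>t. t \<ge> 0 \<Longrightarrow> continuous_on UNIV (\<lambda>a. jacobian (\<lambda>y. f y t) (at a))"
    and lip: "\<exists>K1>0. \<forall>t\<ge>0. \<forall>a b.
       norm (f a t - f b t) + norm (\<sigma> a t - \<sigma> b t) \<le> K1 * norm (a - b)"
    and growth: "\<exists>K2>0. \<forall>t\<ge>0. \<forall>a.
       (norm (f a t))\<^sup>2 + (norm (\<sigma> a t))\<^sup>2 \<le> K2 * (1 + (norm a)\<^sup>2)"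
    and lam_pos: "lam > 0"
    and H1: "\<And>a t \<mu>. t \<ge> 0 \<Longrightarrow> mat_eigenvalue (sym_part (jacobian (\<lambda>y. f y t) (at a))) \<mu> \<Longrightarrow> \<mu> \<le> - lam"
    and H2: "\<And>a t. t \<ge> 0 \<Longrightarrow> trace (transpose (\<sigma> a t) ** \<sigma> a t) \<le> C"
    and t: "t \<ge> 0"
  shows "ito_generator aug_V (aug_drift f) (aug_diff \<sigma>) x t \<le> - 2 * lam * aug_V x t + 2 * C"
proof -
  define a where "a = fstblk x"
  define b where "b = sndblk x"
  define G where "G = aug_diff \<sigma> x t"
  have d0: "deriv (\<lambda>s. aug_V x s) t = 0"
    unfolding aug_V_def by simp
  have pdF: "pd (aug_drift f x t) = f a t - f b t"
    by (simp add: vec_eq_iff pd_def fstblk_def sndblk_def aug_drift_def a_def b_def)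
  have dr: "(a - b) \<bullet> (f a t - f b t) \<le> - lam * ((a - b) \<bullet> (a - b))"
    by (rule drift_bound[where f="\<lambda>y. f y t"]) (use diff H1 t in auto)
  have pdx: "pd x = a - b" by (simp add: pd_def a_def b_def)
  have inner: "(\<Sum>i\<in>UNIV. \<Sum>j\<in>UNIV. G $ i $ k
          * frechet_derivative (\<lambda>y. frechet_derivative (\<lambda>z. aug_V z t) (at y) (axis j 1)) (at x) (axis i 1)
          * G $ j $ k) = 2 * (pd (\<chi> i. G$i$k) \<bullet> pd (\<chi> i. G$i$k))" for k
    by (simp add: fd2 quadsum[OF lin_pd] sum_distrib_left algebra_simps)
  have cl: "pd (\<chi> i. G$i$Inl l) = (\<chi> i. \<sigma> a t $ i $ l)" for l
    by (simp add: vec_eq_iff pd_def fstblk_def sndblk_def aug_diff_def a_def b_def G_def)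
  have cr: "pd (\<chi> i. G$i$Inr l) = - (\<chi> i. \<sigma> b t $ i $ l)" for l
    by (simp add: vec_eq_iff pd_def fstblk_def sndblk_def aug_diff_def a_def b_def G_def)
  have "(\<Sum>k\<in>(UNIV::('d+'d) set). pd (\<chi> i. G$i$k) \<bullet> pd (\<chi> i. G$i$k))
      = (\<Sum>l\<in>UNIV. pd (\<chi> i. G$i$Inl l) \<bullet> pd (\<chi> i. G$i$Inl l)) + (\<Sum>l\<in>UNIV. pd (\<chi> i. G$i$Inr l) \<bullet> pd (\<chi> i. G$i$Inr l))"
    by (subst UNIV_Plus_UNIV[symmetric], subst sum.Plus) (auto simp: o_def)
  also have "\<dots> = trace (transpose (\<sigma> a t) ** \<sigma> a t) + trace (transpose (\<sigma> b t) ** \<sigma> b t)"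
    by (simp add: cl cr colsq)
  also have "\<dots> \<le> 2 * C" using H2[OF t, of a] H2[OF t, of b] by simp
  finally have diffu: "(\<Sum>k\<in>(UNIV::('d+'d) set). pd (\<chi> i. G$i$k) \<bullet> pd (\<chi> i. G$i$k)) \<le> 2 * C" .
  have "ito_generator aug_V (aug_drift f) (aug_diff \<sigma>) x t
      = 2 * ((a - b) \<bullet> (f a t - f b t)) + (\<Sum>k\<in>(UNIV::('d+'d) set). pd (\<chi> i. G$i$k) \<bullet> pd (\<chi> i. G$i$k))"
    unfolding ito_generator_def G_def[symmetric] inner unfolding d0 fd1 pdF pdx
    by (simp add: sum_distrib_left[symmetric])
  moreover have "aug_V x t = (a - b) \<bullet> (a - b)" by (simp add: V_eq pdx)
  ultimately show ?thesis using dr diffu by simp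
qed

end
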